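(* Let $a,c\in[0,1]$ with $a\neq\frac12$, $c\neq\frac12$, and define $f_{a,c}:[0,1]\to[0,1]$ by $$f_{a,c}(x)=\begin{cases}(1-2a)x^2+2ax, & x\in[0,\frac13],\\ x, & x\in(\frac13,\frac23),\\ (1-2c)x^2+2cx, & x\in[\frac23,1].\end{cases}$$ Let $f^n$ denote the $n$-fold composition of $f=f_{a,c}$ with itself and $x^{(n)}=f^n(x^{(0)})$. Then: 1. The set of fixed points of $f_{a,c}$ is $(\frac13,\frac23)\cup\{0,1\}$. 2. If $0\le a<\frac12$ and $0\le c<\frac12$, then for every $x^{(0)}\in[\frac23,1)$ there exist $n\in\mathbb N$ and $p\in[\frac49(1+c),\frac23)$ such that $f^n(x^{(0)})=p$ and $f^{n+1}(x^{(0)})=f(p)=p$. 3. If $0\le a<\frac12$ (and $c\ne\frac12$ arbitrary), then $\lim_{n\to\infty}x^{(n)}=0$ for all $x^{(0)}\in[0,\frac13]$. 4. If $\frac12<c\le1$ (and $a\ne\frac12$ arbitrary), then $\lim_{n\to\infty}x^{(n)}=1$ for all $x^{(0)}\in[\frac23,1]$. 5. If $\frac12<a\le1$ and $0\le c<\frac12$, then for every $x^{(0)}\in(0,\frac13]$ (respectively $x^{(0)}\in[\frac23,1)$) there exist $n\in\mathbb N$ and $p\in(\frac13,\frac19(4a+1)]$ (respectively $p\in[\frac49(1+c),\frac23)$) such that $f^n(x^{(0)})=p$ and $f^{n+1}(x^{(0)})=f(p)=p$. 6. If $\frac12<a\le1$ and $\frac12<c\le1$, then for every $x^{(0)}\in(0,\frac13]$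 there exist $n\in\mathbb N$ and $p\in(\frac13,\frac19(4a+1)]$ such that $f^n(x^{(0)})=p$ and $f^{n+1}(x^{(0)})=f(p)=p$.
   Context: This map is the reduction to $[0,1]$ of the quadratic stochastic operator $x'=x^2+2p(x)xy$, $y'=2(1-p(x))xy+y^2$ (with $y=1-x$), where $p(x)=a$ for $x\le\frac13$, $b$ for $\frac13<x<\frac23$, $c$ for $x\ge\frac23$, in the case $b=\frac12$. *)

theory Defs
  imports Complex_Main
begin

definition fac :: "real \<Rightarrow> real \<Rightarrow> real \<Rightarrow> real" where
  "fac a c x = (if x \<le> 1/3 then (1 - 2*a) * x^2 + 2*a*x
                else if x < 2/3 then x
                else (1 - 2*c) * x^2 + 2*c*x)"

end

theory Submission
  imports Defs
begin


lemma descent: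
  fixes g :: "real \<Rightarrow> real"
  assumes d: "d > 0"
    and st: "\<And>x. x \<in> S \<Longrightarrow> P (g x) \<or> (g x \<in> S \<and> g x \<le> x - d)"
    and lb: "\<And>x. x \<in> S \<Longrightarrow> L \<le> x"
    and x: "x \<in> S"
  shows "\<exists>n. P ((g ^^ n) x)"
proof -
  have main: "\<And>x. x \<in> S \<Longrightarrow> x \<le> L + real N * d \<Longrightarrow> \<exists>n. P ((g ^^ n) x)" for N
  proof (induction N)
    case 0
    then have "x = L" using lb by force
    have "P (g x)"
    proof (rule ccontr)
      assume "\<not> P (g x)"
      then have "g x \<in> S" "g x \<le> x - d" using st[OF 0(1)] by auto
      then show False using lb[of "g x"] d \<open>x = L\<close> by linarith
    qed
    then show ?case by (intro exI[of _ 1]) simp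
  next
    case (Suc N)
    show ?case
    proof (cases "P (g x)")
      case True then show ?thesis by (intro exI[of _ 1]) simp
    next
      case False
      then have "g x \<in> S" "g x \<le> x - d" using st[OF Suc(2)] by auto
      moreover have "x - d \<le> L + real N * d" using Suc(3) by (simp add: algebra_simps)
      ultimately obtain n where "P ((g ^^ n) (g x))" using Suc.IH by force
      then have "P ((g ^^ Suc n) x)" by (simp add: funpow_Suc_right del: funpow.simps)
      then show ?thesis by blast
    qed
  qed
  obtain N where "(x - L) / d \<le> real N" using real_arch_simple by blast
  then have "x \<le> L + real N * d" using d by (simp add: field_simps)
  then show ?thesis using main x by blast
qed

lemma ascent:
  fixes g :: "real \<Rightarrow> real"
  assumes d: "d > 0"
    and st: "\<And>x. x \<in> S \<Longrightarrow> P (g x) \<or> (g x \<in> S \<and> g x \<ge> x + d)"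
    and ub: "\<And>x. x \<in> S \<Longrightarrow> x \<le> U"
    and x: "x \<in> S"
  shows "\<exists>n. P ((g ^^ n) x)"
proof -
  have main: "\<And>x. x \<in> S \<Longrightarrow> x \<ge> U - real N * d \<Longrightarrow> \<exists>n. P ((g ^^ n) x)" for N
  proof (induction N)
    case 0
    then have "x = U" using ub by force
    have "P (g x)"
    proof (rule ccontr)
      assume "\<not> P (g x)"
      then have "g x \<in> S" "g x \<ge> x + d" using st[OF 0(1)] by auto
      then show False using ub[of "g x"] d \<open>x = U\<close> by linarith
    qed
    then show ?case by (intro exI[of _ 1]) simp
  next
    case (Suc N)
    show ?case
    proof (cases "P (g x)")
      case True then show ?thesis by (intro exI[of _ 1]) simp
    next
      case False
      then have "g x \<in> S" "g x \<ge> x + d" using st[OF Suc(2)] by auto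
      moreover have "x + d \<ge> U - real N * d" using Suc(3) by (simp add: algebra_simps)
      ultimately obtain n where "P ((g ^^ n) (g x))" using Suc.IH by force
      then have "P ((g ^^ Suc n) x)" by (simp add: funpow_Suc_right del: funpow.simps)
      then show ?thesis by blast
    qed
  qed
  obtain N where "(U - x) / d \<le> real N" using real_arch_simple by blast
  then have "x \<ge> U - real N * d" using d by (simp add: field_simps)
  then show ?thesis using main x by blast
qed

lemma fix_iff:
  assumes "a \<noteq> 1/2" "c \<noteq> 1/2"
  shows "{x \<in> {0..1}. fac a c x = x} = {1/3<..<2/3} \<union> {0, 1}"
proof (intro set_eqI iffI)
  fix x :: real assume h: "x \<in> {x \<in> {0..1}. fac a c x = x}"
  show "x \<in> {1/3<..<2/3} \<union> {0, 1}"
  proof (cases "x \<le> 1/3")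
    case True
    then have "(1 - 2*a) * x^2 + 2*a*x - x = 0" using h by (simp add: fac_def)
    then have "(1 - 2*a) * (x * (x - 1)) = 0" by (simp add: algebra_simps power2_eq_square)
    then have "x = 0" using True assms by auto
    then show ?thesis by simp
  next
    case F: False
    show ?thesis
    proof (cases "x < 2/3")
      case True then show ?thesis using F by simp
    next
      case False
      then have "(1 - 2*c) * x^2 + 2*c*x - x = 0" using h F by (simp add: fac_def)
      then have "(1 - 2*c) * (x * (x - 1)) = 0" by (simp add: algebra_simps power2_eq_square)
      then have "x = 1" using False assms by auto
      then show ?thesis by simp
    qed
  qed
next
  fix x :: real assume "x \<in> {1/3<..<2/3} \<union> {0, 1}"
  then show "x \<in> {x \<in> {0..1}. fac a c x = x}"
    by (auto simp: fac_def)
qed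

lemma mid_fix: "1/3 < p \<Longrightarrow> p < 2/3 \<Longrightarrow> fac a c p = p"
  by (simp add: fac_def)

lemma part_high_down:
  assumes "0 \<le> c" "c < 1/2" "x0 \<in> {2/3..<1}"
  shows "\<exists>n::nat. \<exists>p \<in> {4/9*(1+c)..<2/3}.
            (fac a c ^^ n) x0 = p \<and> (fac a c ^^ Suc n) x0 = fac a c p \<and> fac a c p = p"
proof -
  define d where "d = (1-2*c)*(2/3)*(1-x0)"
  have d: "d > 0" using assms by (simp add: d_def)
  have st: "(fac a c x) \<in> {4/9*(1+c)..<2/3} \<or> (fac a c x \<in> {2/3..x0} \<and> fac a c x \<le> x - d)"
    if x: "x \<in> {2/3..x0}" for x
  proof -
    have fx: "fac a c x = (1-2*c)*x^2 + 2*c*x" using x by (simp add: fac_def)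
    have "fac a c x - 4/9*(1+c) = (x - 2/3) * ((1-2*c)*(x+2/3) + 2*c)"
      unfolding fx power2_eq_square by (simp add: field_simps)
    moreover have "(x - 2/3) * ((1-2*c)*(x+2/3) + 2*c) \<ge> 0"
      using x assms by (intro mult_nonneg_nonneg) auto
    ultimately have lo: "fac a c x \<ge> 4/9*(1+c)" by linarith
    have e: "x - fac a c x = (1-2*c) * (x * (1-x))"
      unfolding fx by (simp add: algebra_simps power2_eq_square)
    have "(2/3) * (1-x0) \<le> x * (1-x)"
      using x assms by (intro mult_mono) auto
    then have "(1-2*c)*((2/3)*(1-x0)) \<le> (1-2*c) * (x * (1-x))"
      by (rule mult_left_mono) (use assms in simp)
    moreover have "d = (1-2*c)*((2/3)*(1-x0))" unfolding d_def by (simp only: mult.assoc)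
    ultimately have "d \<le> (1-2*c) * (x * (1-x))" by simp
    then have "fac a c x \<le> x - d" using e by linarith
    then show ?thesis using lo x d by auto
  qed
  obtain n where "(fac a c ^^ n) x0 \<in> {4/9*(1+c)..<2/3}"
    using descent[OF d st, of "2/3" x0] assms by auto
  moreover have "4/9*(1+c) > 1/3" using assms by simp
  ultimately show ?thesis using mid_fix
    by (intro exI[of _ n] bexI[of _ "(fac a c ^^ n) x0"]) auto
qed

lemma part_low_up:
  assumes "1/2 < a" "a \<le> 1" "x0 \<in> {0<..1/3}"
  shows "\<exists>n::nat. \<exists>p \<in> {1/3<..1/9*(4*a+1)}.
            (fac a c ^^ n) x0 = p \<and> (fac a c ^^ Suc n) x0 = fac a c p \<and> fac a c p = p"
proof -
  define d where "d = (2*a-1)*x0*(2/3)"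
  have d: "d > 0" using assms by (simp add: d_def)
  have st: "(fac a c x) \<in> {1/3<..1/9*(4*a+1)} \<or> (fac a c x \<in> {x0..1/3} \<and> fac a c x \<ge> x + d)"
    if x: "x \<in> {x0..1/3}" for x
  proof -
    have fx: "fac a c x = (1-2*a)*x^2 + 2*a*x" using x by (simp add: fac_def)
    have "1/9*(4*a+1) - fac a c x = (1/3 - x) * ((1/3+x) + 2*a*(2/3-x))"
      unfolding fx power2_eq_square by (simp add: field_simps)
    moreover have "(1/3 - x) * ((1/3+x) + 2*a*(2/3-x)) \<ge> 0"
      using x assms by (intro mult_nonneg_nonneg) auto
    ultimately have hi: "fac a c x \<le> 1/9*(4*a+1)" by linarith
    have e: "fac a c x - x = (2*a-1) * (x * (1-x))"
      unfolding fx by (simp add: algebra_simps power2_eq_square)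
    have "x0 * (2/3) \<le> x * (1-x)"
      using x assms by (intro mult_mono) auto
    then have "(2*a-1)*(x0*(2/3)) \<le> (2*a-1) * (x * (1-x))"
      by (rule mult_left_mono) (use assms in simp)
    moreover have "d = (2*a-1)*(x0*(2/3))" unfolding d_def by (simp only: mult.assoc)
    ultimately have "d \<le> (2*a-1) * (x * (1-x))" by simp
    then have "fac a c x \<ge> x + d" using e by linarith
    then show ?thesis using hi x d by auto
  qed
  obtain n where "(fac a c ^^ n) x0 \<in> {1/3<..1/9*(4*a+1)}"
    using ascent[OF d st, of "1/3" x0] assms by auto
  moreover have "1/9*(4*a+1) < 2/3" using assms by simp
  ultimately show ?thesis using mid_fix
    by (intro exI[of _ n] bexI[of _ "(fac a c ^^ n) x0"]) auto
qed

lemma part_low_zero: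
  assumes "0 \<le> a" "a < 1/2" "x0 \<in> {0..1/3}"
  shows "(\<lambda>n. (fac a c ^^ n) x0) \<longlonglongrightarrow> 0"
proof -
  define q where "q = 1 - (2/3)*(1-2*a)"
  have q: "0 \<le> q" "q < 1" using assms by (auto simp: q_def)
  have step: "0 \<le> fac a c x \<and> fac a c x \<le> q * x" if x: "0 \<le> x" "x \<le> 1/3" for x
  proof -
    have fx: "fac a c x = (1-2*a)*x^2 + 2*a*x" using x by (simp add: fac_def)
    have e1: "fac a c x = x * ((1-2*a)*x + 2*a)" unfolding fx power2_eq_square by (simp add: field_simps)
    have e2: "q * x - fac a c x = (1-2*a) * (x * (1/3 - x))"
      unfolding fx power2_eq_square q_def by (simp add: field_simps)
    have "0 \<le> x * ((1-2*a)*x + 2*a)" using x assms by (intro mult_nonneg_nonneg) auto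
    moreover have "0 \<le> (1-2*a) * (x * (1/3 - x))" using x assms by (intro mult_nonneg_nonneg) auto
    ultimately show ?thesis using e1 e2 by linarith
  qed
  have bnd: "0 \<le> (fac a c ^^ n) x0 \<and> (fac a c ^^ n) x0 \<le> q^n * x0" for n
  proof (induction n)
    case 0 then show ?case using assms by simp
  next
    case (Suc n)
    let ?y = "(fac a c ^^ n) x0"
    have "?y \<le> 1/3"
    proof -
      have "q^n * x0 \<le> 1 * x0" using q assms by (intro mult_right_mono) (auto simp: power_le_one)
      then show ?thesis using Suc assms by simp
    qed
    then have "0 \<le> fac a c ?y \<and> fac a c ?y \<le> q * ?y" using step Suc by blast
    moreover have "q * ?y \<le> q * (q^n * x0)" using Suc q by (intro mult_left_mono) auto
    ultimately show ?case by simp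
  qed
  have "(\<lambda>n. q^n * x0) \<longlonglongrightarrow> 0"
    using q by (intro tendsto_mult_left_zero LIMSEQ_power_zero) simp
  moreover have "\<forall>\<^sub>F n in sequentially. (\<lambda>n. 0) n \<le> (fac a c ^^ n) x0" using bnd by simp
  moreover have "\<forall>\<^sub>F n in sequentially. (fac a c ^^ n) x0 \<le> q^n * x0" using bnd by simp
  ultimately show ?thesis
    using real_tendsto_sandwich[of "\<lambda>n. 0" "\<lambda>n. (fac a c ^^ n) x0"] by auto
qed

lemma part_high_one:
  assumes "1/2 < c" "c \<le> 1" "x0 \<in> {2/3..1}"
  shows "(\<lambda>n. (fac a c ^^ n) x0) \<longlonglongrightarrow> 1"
proof -
  define r where "r = 1 - (2/3)*(2*c-1)"
  have r: "0 \<le> r" "r < 1" using assms by (auto simp: r_def)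
  have step: "2/3 \<le> fac a c x \<and> 0 \<le> 1 - fac a c x \<and> 1 - fac a c x \<le> r * (1 - x)"
    if x: "2/3 \<le> x" "x \<le> 1" for x
  proof -
    have fx: "fac a c x = (1-2*c)*x^2 + 2*c*x" using x by (simp add: fac_def)
    have e0: "fac a c x - x = (2*c-1) * (x * (1-x))" unfolding fx power2_eq_square by (simp add: field_simps)
    have e1: "1 - fac a c x = (1-x) * (1 - (2*c-1)*x)" unfolding fx power2_eq_square by (simp add: field_simps)
    have e2: "r * (1-x) - (1 - fac a c x) = (2*c-1) * ((1-x) * (x - 2/3))"
      unfolding fx power2_eq_square r_def by (simp add: field_simps)
    have p0: "0 \<le> (2*c-1) * (x * (1-x))" using x assms by (intro mult_nonneg_nonneg) auto
    have m: "(2*c-1)*x \<le> 1" using x assms by (intro mult_le_one) auto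
    have p1: "0 \<le> (1-x) * (1 - (2*c-1)*x)" using x m by (intro mult_nonneg_nonneg) auto
    have p2: "0 \<le> (2*c-1) * ((1-x) * (x - 2/3))" using x assms by (intro mult_nonneg_nonneg) auto
    have g1: "2/3 \<le> fac a c x" using e0 p0 x(1) by linarith
    have g2: "0 \<le> 1 - fac a c x" using e1 p1 by linarith
    have g3: "1 - fac a c x \<le> r * (1 - x)" using e2 p2 by linarith
    show ?thesis using g1 g2 g3 by blast
  qed
  have bnd: "2/3 \<le> (fac a c ^^ n) x0 \<and> 0 \<le> 1 - (fac a c ^^ n) x0 \<and> 1 - (fac a c ^^ n) x0 \<le> r^n * (1 - x0)" for n
  proof (induction n)
    case 0 then show ?case using assms by simp
  next
    case (Suc n)
    let ?y = "(fac a c ^^ n) x0"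
    have "2/3 \<le> fac a c ?y \<and> 0 \<le> 1 - fac a c ?y \<and> 1 - fac a c ?y \<le> r * (1 - ?y)" using step Suc by auto
    moreover have "r * (1 - ?y) \<le> r * (r^n * (1 - x0))" using Suc r by (intro mult_left_mono) auto
    ultimately show ?case by simp
  qed
  have "(\<lambda>n. r^n * (1 - x0)) \<longlonglongrightarrow> 0"
    using r by (intro tendsto_mult_left_zero LIMSEQ_power_zero) simp
  moreover have "\<forall>\<^sub>F n in sequentially. (\<lambda>n. 0) n \<le> 1 - (fac a c ^^ n) x0" using bnd by simp
  moreover have "\<forall>\<^sub>F n in sequentially. 1 - (fac a c ^^ n) x0 \<le> r^n * (1 - x0)" using bnd by simp
  ultimately have "(\<lambda>n. 1 - (fac a c ^^ n) x0) \<longlonglongrightarrow> 0"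
    using real_tendsto_sandwich[of "\<lambda>n. 0" "\<lambda>n. 1 - (fac a c ^^ n) x0"] by auto
  then have "(\<lambda>n. 1 - (1 - (fac a c ^^ n) x0)) \<longlonglongrightarrow> 1 - 0"
    by (intro tendsto_diff tendsto_const)
  then show ?thesis by simp
qed

theorem theorem2p6:
  fixes a c :: real
  assumes "0 \<le> a" "a \<le> 1" "0 \<le> c" "c \<le> 1" "a \<noteq> 1/2" "c \<noteq> 1/2"
  defines "f \<equiv> fac a c"
  shows
    "({x \<in> {0..1}. f x = x} = {1/3<..<2/3} \<union> {0, 1})
     \<and> (a < 1/2 \<and> c < 1/2 \<longrightarrow>
         (\<forall>x0 \<in> {2/3..<1}. \<exists>n::nat. \<exists>p \<in> {4/9*(1+c)..<2/3}.
            (f ^^ n) x0 = p \<and> (f ^^ Suc n) x0 = f p \<and> f p = p))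
     \<and> (a < 1/2 \<longrightarrow> (\<forall>x0 \<in> {0..1/3}. (\<lambda>n. (f ^^ n) x0) \<longlonglongrightarrow> 0))
     \<and> (1/2 < c \<longrightarrow> (\<forall>x0 \<in> {2/3..1}. (\<lambda>n. (f ^^ n) x0) \<longlonglongrightarrow> 1))
     \<and> (1/2 < a \<and> c < 1/2 \<longrightarrow>
         (\<forall>x0 \<in> {0<..1/3}. \<exists>n::nat. \<exists>p \<in> {1/3<..1/9*(4*a+1)}.
            (f ^^ n) x0 = p \<and> (f ^^ Suc n) x0 = f p \<and> f p = p) \<and>
         (\<forall>x0 \<in> {2/3..<1}. \<exists>n::nat. \<exists>p \<in> {4/9*(1+c)..<2/3}.
            (f ^^ n) x0 = p \<and> (f ^^ Suc n) x0 = f p \<and> f p = p))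
     \<and> (1/2 < a \<and> 1/2 < c \<longrightarrow>
         (\<forall>x0 \<in> {0<..1/3}. \<exists>n::nat. \<exists>p \<in> {1/3<..1/9*(4*a+1)}.
            (f ^^ n) x0 = p \<and> (f ^^ Suc n) x0 = f p \<and> f p = p))"
    unfolding f_def
proof (intro conjI impI)
  show "{x \<in> {0..1}. fac a c x = x} = {1/3<..<2/3} \<union> {0, 1}" using fix_iff[OF assms(5,6)] .
next
  assume "a < 1/2 \<and> c < 1/2"
  then show "\<forall>x0 \<in> {2/3..<1}. \<exists>n::nat. \<exists>p \<in> {4/9*(1+c)..<2/3}.
            (fac a c ^^ n) x0 = p \<and> (fac a c ^^ Suc n) x0 = fac a c p \<and> fac a c p = p"
    using part_high_down[OF assms(3)] by blast
next
  assume "a < 1/2"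
  then show "\<forall>x0 \<in> {0..1/3}. (\<lambda>n. (fac a c ^^ n) x0) \<longlonglongrightarrow> 0"
    using part_low_zero[OF assms(1)] by blast
next
  assume "1/2 < c"
  then show "\<forall>x0 \<in> {2/3..1}. (\<lambda>n. (fac a c ^^ n) x0) \<longlonglongrightarrow> 1"
    using part_high_one[OF _ assms(4)] by blast
next
  assume h: "1/2 < a \<and> c < 1/2"
  then show "\<forall>x0 \<in> {0<..1/3}. \<exists>n::nat. \<exists>p \<in> {1/3<..1/9*(4*a+1)}.
            (fac a c ^^ n) x0 = p \<and> (fac a c ^^ Suc n) x0 = fac a c p \<and> fac a c p = p"
    using part_low_up[OF _ assms(2)] by blast
  show "\<forall>x0 \<in> {2/3..<1}. \<exists>n::nat. \<exists>p \<in> {4/9*(1+c)..<2/3}.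
            (fac a c ^^ n) x0 = p \<and> (fac a c ^^ Suc n) x0 = fac a c p \<and> fac a c p = p"
    using h part_high_down[OF assms(3)] by blast
next
  assume "1/2 < a \<and> 1/2 < c"
  then show "\<forall>x0 \<in> {0<..1/3}. \<exists>n::nat. \<exists>p \<in> {1/3<..1/9*(4*a+1)}.
            (fac a c ^^ n) x0 = p \<and> (fac a c ^^ Suc n) x0 = fac a c p \<and> fac a c p = p"
    using part_low_up[OF _ assms(2)] by blast
qed

end
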